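(* Let $\mathcal{H}\subseteq\{0,1\}^{\mathcal{X}}$ be a hypothesis class and $\omega_m$ the clique number of $G_m(\mathcal{H})$. Then for all $m\ge1$, $\omega_m\le(2m+1)^{\mathtt{LD}(\mathcal{H})}\le(2m+1)^{\mathtt{CD}(\mathcal{H})}$.
   Context: A dataset of size $m$ is $S=((x_1,y_1),\dots,(x_m,y_m))\in(\mathcal{X}\times\{0,1\})^m$; it is $\mathcal{H}$-realizable if some $h\in\mathcal{H}$ satisfies $h(x_i)=y_i$ for all $i$. $G_m(\mathcal{H})$ is the graph on realizable datasets of size $m$ with $S,S'$ adjacent iff there is $x$ with $(x,0)$ appearing in $S$ and $(x,1)$ appearing in $S'$; $\omega_m$ is its clique number; $\mathtt{CD}(\mathcal{H})=\sup\{m:\omega_m=2^m\}$. A mistake tree is a complete binary tree whose internal nodes are labeled by points of $\mathcal{X}$, each internal node having one outgoing edge labeled $0$ and one labeled $1$; a root-to-leaf path yields the sequence of (node label, edge label) pairs. $\mathcal{H}$ shatters the tree if every root-to-leaf path is realizable by $\mathcal{H}$. $\mathtt{LD}(\mathcal{H})$ is the largest depth of a complete mistake tree shattered by $\mathcal{H}$ ($\infty$ if unbounded). *)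

theory Defs
  imports Main "HOL-Library.Extended_Nat"
begin

text \<open>Points range over the type 'x (the domain X); labels 0/1 are False/True.
  A hypothesis class is a set of functions 'x => bool.
  A dataset of size m is a list of (point,label) pairs of length m.\<close>

type_synonym 'x dataset = "('x \<times> bool) list"

definition realizable :: "('x \<Rightarrow> bool) set \<Rightarrow> 'x dataset \<Rightarrow> bool" where
  "realizable H S \<longleftrightarrow> (\<exists>h\<in>H. \<forall>(x,y)\<in>set S. h x = y)"

definition realizable_datasets :: "('x \<Rightarrow> bool) set \<Rightarrow> nat \<Rightarrow> 'x dataset set" where
  "realizable_datasets H m = {S. length S = m \<and> realizable H S}"

definition adjacent :: "'x dataset \<Rightarrow> 'x dataset \<Rightarrow> bool" where
  "adjacent S S' \<longleftrightarrow> (\<exists>x. ((x,False) \<in> set S \<and> (x,True) \<in> set S') \<or>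
                             ((x,True) \<in> set S \<and> (x,False) \<in> set S'))"

definition is_clique :: "('x \<Rightarrow> bool) set \<Rightarrow> nat \<Rightarrow> 'x dataset set \<Rightarrow> bool" where
  "is_clique H m C \<longleftrightarrow> C \<subseteq> realizable_datasets H m \<and>
     (\<forall>S\<in>C. \<forall>S'\<in>C. S \<noteq> S' \<longrightarrow> adjacent S S')"

definition clique_number :: "('x \<Rightarrow> bool) set \<Rightarrow> nat \<Rightarrow> enat" where
  "clique_number H m = Sup {enat (card C) | C. finite C \<and> is_clique H m C}"

definition CD :: "('x \<Rightarrow> bool) set \<Rightarrow> enat" where
  "CD H = Sup {enat m | m. clique_number H m = enat (2 ^ m)}"

text \<open>Mistake trees: internal nodes labelled by points; left subtree = edge 0,
  right subtree = edge 1.\<close>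
datatype 'x mtree = Leaf | Node 'x "'x mtree" "'x mtree"

fun complete_of_depth :: "'x mtree \<Rightarrow> nat \<Rightarrow> bool" where
  "complete_of_depth Leaf n = (n = 0)"
| "complete_of_depth (Node x l r) n =
     (n > 0 \<and> complete_of_depth l (n - 1) \<and> complete_of_depth r (n - 1))"

fun paths :: "'x mtree \<Rightarrow> 'x dataset set" where
  "paths Leaf = {[]}"
| "paths (Node x l r) = ((#) (x, False)) ` paths l \<union> ((#) (x, True)) ` paths r"

definition shatters_tree :: "('x \<Rightarrow> bool) set \<Rightarrow> 'x mtree \<Rightarrow> bool" where
  "shatters_tree H T \<longleftrightarrow> (\<forall>p\<in>paths T. realizable H p)"

definition LD :: "('x \<Rightarrow> bool) set \<Rightarrow> enat" where
  "LD H = Sup {enat d | d. \<exists>T. complete_of_depth T d \<and> shatters_tree H T}"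

definition epow :: "nat \<Rightarrow> enat \<Rightarrow> enat" where
  "epow b e = (case e of enat n \<Rightarrow> enat (b ^ n)
               | \<infinity> \<Rightarrow> (if b \<le> 1 then enat b else \<infinity>))"

end

theory Submission
  imports Defs
begin

definition sub :: "('x \<Rightarrow> bool) set \<Rightarrow> 'x \<Rightarrow> bool \<Rightarrow> ('x \<Rightarrow> bool) set" where
  "sub H x b = {h\<in>H. h x = b}"


lemma clique_rd: "is_clique H m C \<Longrightarrow> S \<in> C \<Longrightarrow> length S = m \<and> realizable H S"
proof -
  assume a: "is_clique H m C" "S \<in> C"
  have "C \<subseteq> realizable_datasets H m" using a(1) unfolding is_clique_def by (rule conjunct1)
  then have "S \<in> realizable_datasets H m" using a(2) by (rule subsetD)
  then show ?thesis unfolding realizable_datasets_def by simp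
qed

lemma clique_adj: "is_clique H m C \<Longrightarrow> \<forall>S\<in>C. \<forall>S'\<in>C. S \<noteq> S' \<longrightarrow> adjacent S S'"
  unfolding is_clique_def by (rule conjunct2)

lemma clique_len: "is_clique H m C \<Longrightarrow> \<forall>S\<in>C. length S = m"
  using clique_rd by blast

lemma realizable_cons: "realizable H S \<Longrightarrow> (x,True) \<in> set S \<Longrightarrow> (x,False) \<in> set S \<Longrightarrow> False"
proof -
  assume a: "realizable H S" "(x,True) \<in> set S" "(x,False) \<in> set S"
  from a(1) obtain g where g: "\<forall>(z,y)\<in>set S. g z = y" unfolding realizable_def by blast
  have "g x = True" using g a(2) by auto
  moreover have "g x = False" using g a(3) by auto
  ultimately show False by simp
qed

lemma realizable_mono:
  assumes a: "realizable H q" "set p \<subseteq> set q"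
  shows "realizable H p"
proof -
  from a(1) obtain h where h: "h \<in> H" "\<forall>(x,y)\<in>set q. h x = y" unfolding realizable_def by blast
  have "\<forall>(x,y)\<in>set p. h x = y"
  proof (intro ballI, clarify)
    fix x y assume "(x,y) \<in> set p"
    then have "(x,y) \<in> set q" using a(2) by (rule subsetD[rotated])
    then show "h x = y" using h(2) by auto
  qed
  then show ?thesis using h(1) unfolding realizable_def by blast
qed

lemma paths_ex: "\<exists>p. p \<in> paths T"
proof (induction T)
  case Leaf
  show ?case by simp
next
  case (Node x l r)
  then obtain p where "p \<in> paths l" by blast
  then have "(x,False)#p \<in> paths (Node x l r)" by simp
  then show ?case by blast
qed

lemma paths_nonempty: "paths T \<noteq> {}"
  using paths_ex[of T] by blast

lemma trunc_ex:
  "complete_of_depth T d \<Longrightarrow> k \<le> d \<Longrightarrow>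
   \<exists>T'. complete_of_depth T' k \<and> (\<forall>p\<in>paths T'. \<exists>q\<in>paths T. set p \<subseteq> set q)"
proof (induction T arbitrary: d k)
  case Leaf
  thus ?case by (intro exI[of _ Leaf]) auto
next
  case (Node x l r)
  show ?case
  proof (cases k)
    case 0
    obtain q where "q \<in> paths (Node x l r)" using paths_nonempty[of "Node x l r"] by blast
    then show ?thesis using 0 by (intro exI[of _ Leaf]) auto
  next
    case (Suc k')
    from Node.prems Suc have h: "complete_of_depth l (d-1)" "complete_of_depth r (d-1)" "k' \<le> d-1"
      by auto
    obtain l' where l': "complete_of_depth l' k'" "\<forall>p\<in>paths l'. \<exists>q\<in>paths l. set p \<subseteq> set q"
      using Node.IH(1)[OF h(1) h(3)] by blast
    obtain r' where r': "complete_of_depth r' k'" "\<forall>p\<in>paths r'. \<exists>q\<in>paths r. set p \<subseteq> set q"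
      using Node.IH(2)[OF h(2) h(3)] by blast
    have "\<forall>p\<in>paths (Node x l' r'). \<exists>q\<in>paths (Node x l r). set p \<subseteq> set q"
    proof
      fix p assume "p \<in> paths (Node x l' r')"
      then consider p0 where "p0 \<in> paths l'" "p = (x,False)#p0"
        | p0 where "p0 \<in> paths r'" "p = (x,True)#p0" by auto
      then show "\<exists>q\<in>paths (Node x l r). set p \<subseteq> set q"
      proof cases
        case 1
        then obtain q where "q \<in> paths l" "set p0 \<subseteq> set q" using l' by blast
        then show ?thesis using 1 by (intro bexI[of _ "(x,False)#q"]) auto
      next
        case 2
        then obtain q where "q \<in> paths r" "set p0 \<subseteq> set q" using r' by blast
        then show ?thesis using 2 by (intro bexI[of _ "(x,True)#q"]) auto
      qed
    qed
    then show ?thesis using l' r' Suc by (intro exI[of _ "Node x l' r'"]) auto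
  qed
qed

lemma LD_ge: "complete_of_depth T k \<Longrightarrow> shatters_tree H T \<Longrightarrow> enat k \<le> LD H"
  unfolding LD_def by (rule Sup_upper) blast

lemma LD_gt:
  assumes "enat k < LD H"
  shows "\<exists>T. complete_of_depth T (Suc k) \<and> shatters_tree H T"
proof -
  from assms obtain y where y: "y \<in> {enat d |d. \<exists>T. complete_of_depth T d \<and> shatters_tree H T}"
    "enat k < y" unfolding LD_def using less_Sup_iff by blast
  then obtain d T where d: "y = enat d" "complete_of_depth T d" "shatters_tree H T" by blast
  with y have "Suc k \<le> d" by simp
  from trunc_ex[OF d(2) this] obtain T' where T': "complete_of_depth T' (Suc k)"
    "\<forall>p\<in>paths T'. \<exists>q\<in>paths T. set p \<subseteq> set q" by blast
  have "shatters_tree H T'"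
    unfolding shatters_tree_def
  proof
    fix p assume "p \<in> paths T'"
    then obtain q where "q \<in> paths T" "set p \<subseteq> set q" using T' by blast
    then show "realizable H p" using d(3) realizable_mono unfolding shatters_tree_def by blast
  qed
  with T' show ?thesis by blast
qed

lemma node_shatter:
  "shatters_tree (sub H x False) T0 \<Longrightarrow> shatters_tree (sub H x True) T1 \<Longrightarrow>
   shatters_tree H (Node x T0 T1)"
proof -
  assume a0: "shatters_tree (sub H x False) T0" and a1: "shatters_tree (sub H x True) T1"
  show ?thesis unfolding shatters_tree_def
  proof
    fix p assume "p \<in> paths (Node x T0 T1)"
    then consider p0 where "p0 \<in> paths T0" "p = (x,False)#p0"
      | p0 where "p0 \<in> paths T1" "p = (x,True)#p0" by auto
    then show "realizable H p"
    proof cases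
      case 1
      then obtain h where "h \<in> sub H x False" "\<forall>(z,y)\<in>set p0. h z = y"
        using a0 unfolding shatters_tree_def realizable_def by blast
      then show ?thesis using 1 unfolding realizable_def sub_def by auto
    next
      case 2
      then obtain h where "h \<in> sub H x True" "\<forall>(z,y)\<in>set p0. h z = y"
        using a1 unfolding shatters_tree_def realizable_def by blast
      then show ?thesis using 2 unfolding realizable_def sub_def by auto
    qed
  qed
qed

lemma LD_split:
  assumes "LD H \<le> enat (Suc d)"
  shows "\<exists>b. LD (sub H x b) \<le> enat d"
proof (rule ccontr)
  assume "\<not> ?thesis"
  then have h0: "enat d < LD (sub H x False)" and h1: "enat d < LD (sub H x True)"
    by (auto simp: not_le)
  obtain T0 where "complete_of_depth T0 (Suc d)" "shatters_tree (sub H x False) T0"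
    using LD_gt[OF h0] by blast
  moreover obtain T1 where "complete_of_depth T1 (Suc d)" "shatters_tree (sub H x True) T1"
    using LD_gt[OF h1] by blast
  ultimately
  have "complete_of_depth (Node x T0 T1) (Suc (Suc d))" "shatters_tree H (Node x T0 T1)"
    using node_shatter by auto
  then have "enat (Suc (Suc d)) \<le> LD H" by (rule LD_ge)
  with assms have "enat (Suc (Suc d)) \<le> enat (Suc d)" by (meson order_trans)
  then show False by simp
qed

lemma LD_zero:
  assumes "LD H \<le> enat 0" "realizable H [(x,False)]" "realizable H [(x,True)]"
  shows False
proof -
  have "complete_of_depth (Node x Leaf Leaf) 1" by simp
  moreover have "shatters_tree H (Node x Leaf Leaf)"
    using assms(2,3) unfolding shatters_tree_def by auto
  ultimately have "enat 1 \<le> LD H" by (rule LD_ge)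
  then have "enat 1 \<le> enat 0" using assms(1) by (rule order_trans)
  then show False by simp
qed

lemma realizable_sub:
  assumes "realizable H S" "(x,b) \<in> set S"
  shows "realizable (sub H x b) S"
proof -
  obtain h where h: "h \<in> H" "\<forall>(z,y)\<in>set S. h z = y" using assms(1) unfolding realizable_def by blast
  then have "h x = b" using assms(2) by auto
  with h show ?thesis unfolding realizable_def sub_def by blast
qed

lemma clique_sub:
  assumes cl: "is_clique H m C"
  shows "is_clique (sub H x b) m {S\<in>C. (x,b) \<in> set S}"
proof -
  have c1: "C \<subseteq> realizable_datasets H m" using cl unfolding is_clique_def by (rule conjunct1)
  have c2: "\<forall>S\<in>C. \<forall>S'\<in>C. S \<noteq> S' \<longrightarrow> adjacent S S'" using cl by (rule clique_adj)
  have "{S\<in>C. (x,b) \<in> set S} \<subseteq> realizable_datasets (sub H x b) m"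
  proof
    fix S assume "S \<in> {S\<in>C. (x,b) \<in> set S}"
    then have S: "S \<in> C" "(x,b) \<in> set S" by simp_all
    have "S \<in> realizable_datasets H m" using c1 S(1) by (rule subsetD)
    then have "length S = m" "realizable H S" unfolding realizable_datasets_def by simp_all
    moreover have "realizable (sub H x b) S" by (rule realizable_sub[OF \<open>realizable H S\<close> S(2)])
    ultimately show "S \<in> realizable_datasets (sub H x b) m" unfolding realizable_datasets_def by simp
  qed
  moreover have "\<forall>S\<in>{S\<in>C. (x,b) \<in> set S}. \<forall>S'\<in>{S\<in>C. (x,b) \<in> set S}. S \<noteq> S' \<longrightarrow> adjacent S S'"
    using c2 by simp
  ultimately show ?thesis unfolding is_clique_def by (rule conjI)
qed

definition negl :: "'x \<times> bool \<Rightarrow> 'x \<times> bool" where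
  "negl l = (fst l, \<not> snd l)"

lemma inj_negl: "inj negl"
  unfolding inj_def negl_def by (auto simp: prod_eq_iff)

lemma card_filter_sum:
  "finite A \<Longrightarrow> card {x\<in>A. P x} = (\<Sum>x\<in>A. if P x then 1 else 0)"
  by (simp add: sum.If_cases Int_def conj_commute)

lemma double_count:
  fixes C :: "'x dataset set" and f :: "'x \<times> bool \<Rightarrow> 'x \<times> bool"
  assumes fin: "finite C" and len: "\<forall>S\<in>C. length S = m" and inj: "inj f"
  shows "(\<Sum>l\<in>(\<Union>S\<in>C. set S). card {S\<in>C. f l \<in> set S}) \<le> card C * m"
proof -
  let ?L = "\<Union>S\<in>C. set S"
  have finL: "finite ?L" using fin by auto
  have "(\<Sum>l\<in>?L. card {S\<in>C. f l \<in> set S})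
        = (\<Sum>l\<in>?L. \<Sum>S\<in>C. if f l \<in> set S then 1 else 0)"
    by (rule sum.cong[OF refl], rule card_filter_sum[OF fin])
  also have "\<dots> = (\<Sum>S\<in>C. \<Sum>l\<in>?L. if f l \<in> set S then 1 else 0)"
    by (rule sum.swap)
  also have "\<dots> = (\<Sum>S\<in>C. card {l\<in>?L. f l \<in> set S})"
    by (rule sum.cong[OF refl], rule card_filter_sum[OF finL, symmetric])
  also have "\<dots> \<le> (\<Sum>S\<in>C. m)"
  proof (rule sum_mono)
    fix S assume "S \<in> C"
    have "card {l\<in>?L. f l \<in> set S} \<le> card (set S)"
    proof (rule card_inj_on_le[where f=f])
      show "inj_on f {l\<in>?L. f l \<in> set S}" using inj by (simp add: inj_on_def inj_def)
      show "f ` {l\<in>?L. f l \<in> set S} \<subseteq> set S" by blast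
    qed simp
    also have "\<dots> \<le> length S" by (rule card_length)
    finally show "card {l\<in>?L. f l \<in> set S} \<le> m" using len \<open>S \<in> C\<close> by simp
  qed
  finally show ?thesis by simp
qed

lemma step_count:
  fixes C :: "'x dataset set" and T m :: nat
  assumes fin: "finite C" and len: "\<forall>S\<in>C. length S = m"
    and adj: "\<forall>S\<in>C. \<forall>S'\<in>C. S \<noteq> S' \<longrightarrow> adjacent S S'"
    and small: "\<forall>x. \<exists>b. card {S\<in>C. (x,b) \<in> set S} \<le> T"
    and T1: "1 \<le> T"
  shows "card C \<le> (2*m+1)*T"
proof -
  define a where "a l = card {S\<in>C. l \<in> set S}" for l :: "'x \<times> bool"
  define L where "L = (\<Union>S\<in>C. set S)"
  have finL: "finite L" using fin unfolding L_def by auto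
  let ?n = "card C"
  have prod: "a l * a (negl l) \<le> T * (a l + a (negl l))" for l
  proof -
    obtain x y where l: "l = (x,y)" by fastforce
    obtain b where b: "card {S\<in>C. (x,b) \<in> set S} \<le> T" using small by blast
    show ?thesis
    proof (cases "b = y")
      case True
      then have "a l \<le> T" using b l a_def by simp
      then have "a l * a (negl l) \<le> T * a (negl l)" by (rule mult_right_mono) simp
      also have "\<dots> \<le> T * (a l + a (negl l))" by (rule mult_left_mono) simp_all
      finally show ?thesis .
    next
      case False
      then have "b = (\<not> y)" by auto
      then have "a (negl l) \<le> T" using b l by (simp add: a_def negl_def)
      then have "a l * a (negl l) \<le> a l * T" by (rule mult_left_mono) simp
      also have "\<dots> = T * a l" by simp
      also have "\<dots> \<le> T * (a l + a (negl l))" by (rule mult_left_mono) simp_all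
      finally show ?thesis .
    qed
  qed
  have sub1: "C \<times> C \<subseteq> (\<Union>l\<in>L. {S\<in>C. l \<in> set S} \<times> {S\<in>C. negl l \<in> set S}) \<union> (\<lambda>S. (S,S)) ` C"
  proof
    fix p assume "p \<in> C \<times> C"
    then obtain S S' where p: "p = (S,S')" "S \<in> C" "S' \<in> C" by auto
    show "p \<in> (\<Union>l\<in>L. {S\<in>C. l \<in> set S} \<times> {S\<in>C. negl l \<in> set S}) \<union> (\<lambda>S. (S,S)) ` C"
    proof (cases "S = S'")
      case True then show ?thesis using p by auto
    next
      case False
      then have "adjacent S S'" using adj p by blast
      then obtain x where "((x,False) \<in> set S \<and> (x,True) \<in> set S') \<or>
                             ((x,True) \<in> set S \<and> (x,False) \<in> set S')"
        unfolding adjacent_def by blast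
      then show ?thesis
      proof
        assume h: "(x,False) \<in> set S \<and> (x,True) \<in> set S'"
        then have "(x,False) \<in> L" using p unfolding L_def by blast
        then show ?thesis using h p by (auto simp: negl_def intro!: bexI[of _ "(x,False)"])
      next
        assume h: "(x,True) \<in> set S \<and> (x,False) \<in> set S'"
        then have "(x,True) \<in> L" using p unfolding L_def by blast
        then show ?thesis using h p by (auto simp: negl_def intro!: bexI[of _ "(x,True)"])
      qed
    qed
  qed
  have "?n * ?n = card (C \<times> C)" by (simp add: card_cartesian_product)
  also have "\<dots> \<le> card ((\<Union>l\<in>L. {S\<in>C. l \<in> set S} \<times> {S\<in>C. negl l \<in> set S}) \<union> (\<lambda>S. (S,S)) ` C)"
    by (rule card_mono[OF _ sub1]) (use fin finL in auto)
  also have "\<dots> \<le> card (\<Union>l\<in>L. {S\<in>C. l \<in> set S} \<times> {S\<in>C. negl l \<in> set S}) + card ((\<lambda>S. (S,S)) ` C)"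
    by (rule card_Un_le)
  also have "\<dots> \<le> (\<Sum>l\<in>L. card ({S\<in>C. l \<in> set S} \<times> {S\<in>C. negl l \<in> set S})) + ?n"
    by (intro add_mono card_UN_le finL card_image_le fin)
  also have "\<dots> = (\<Sum>l\<in>L. a l * a (negl l)) + ?n"
    by (simp add: card_cartesian_product a_def)
  also have "\<dots> \<le> (\<Sum>l\<in>L. T * (a l + a (negl l))) + ?n"
    by (intro add_mono sum_mono prod) simp
  also have "\<dots> = T * ((\<Sum>l\<in>L. a l) + (\<Sum>l\<in>L. a (negl l))) + ?n"
    by (simp only: distrib_left sum.distrib sum_distrib_left)
  also have "\<dots> \<le> T * (?n * m + ?n * m) + ?n"
  proof -
    have "(\<Sum>l\<in>L. a l) \<le> ?n * m"
      using double_count[OF fin len, of id] unfolding a_def L_def by simp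
    moreover have "(\<Sum>l\<in>L. a (negl l)) \<le> ?n * m"
      using double_count[OF fin len inj_negl] unfolding a_def L_def by simp
    ultimately show ?thesis by (intro add_mono mult_left_mono) auto
  qed
  finally have *: "?n * ?n \<le> ?n * (2*T*m + 1)" by (simp add: algebra_simps)
  have "?n \<le> 2*T*m + 1"
  proof (cases "?n = 0")
    case True then show ?thesis by simp
  next
    case False
    from * have "0 < ?n \<longrightarrow> ?n \<le> 2*T*m + 1" by (simp only: mult_le_cancel1)
    then show ?thesis using False by simp
  qed
  also have "\<dots> \<le> (2*m+1)*T" using T1 by (simp add: algebra_simps)
  finally show ?thesis .
qed

lemma clique_bound:
  "LD H \<le> enat d \<Longrightarrow> is_clique H m C \<Longrightarrow> finite C \<Longrightarrow> card C \<le> (2*m+1)^d"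
proof (induction d arbitrary: H C)
  case 0
  have "\<forall>S\<in>C. \<forall>S'\<in>C. S = S'"
  proof (intro ballI, rule ccontr)
    fix S S' assume S: "S \<in> C" "S' \<in> C" "S \<noteq> S'"
    have adj: "adjacent S S'" using clique_adj[OF "0.prems"(2)] S by blast
    have rS: "realizable H S" using clique_rd[OF "0.prems"(2) S(1)] by simp
    have rS': "realizable H S'" using clique_rd[OF "0.prems"(2) S(2)] by simp
    obtain x where x: "((x,False) \<in> set S \<and> (x,True) \<in> set S') \<or>
                             ((x,True) \<in> set S \<and> (x,False) \<in> set S')"
      using adj unfolding adjacent_def by blast
    have "realizable H [(x,False)] \<and> realizable H [(x,True)]"
    proof (cases "(x,False) \<in> set S \<and> (x,True) \<in> set S'")
      case True
      then have "set [(x,False)] \<subseteq> set S" "set [(x,True)] \<subseteq> set S'" by auto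
      then show ?thesis using realizable_mono[OF rS] realizable_mono[OF rS'] by blast
    next
      case False
      then have "(x,True) \<in> set S \<and> (x,False) \<in> set S'" using x by blast
      then have "set [(x,True)] \<subseteq> set S" "set [(x,False)] \<subseteq> set S'" by auto
      then show ?thesis using realizable_mono[OF rS] realizable_mono[OF rS'] by blast
    qed
    then show False using LD_zero[OF "0.prems"(1)] by blast
  qed
  then have "card C \<le> Suc 0" using card_le_Suc0_iff_eq[OF "0.prems"(3)] by blast
  then show ?case by simp
next
  case (Suc d)
  have "card C \<le> (2*m+1)*(2*m+1)^d"
  proof (rule step_count)
    show "finite C" by fact
    show "\<forall>S\<in>C. length S = m" using Suc.prems(2) by (rule clique_len)
    show "\<forall>S\<in>C. \<forall>S'\<in>C. S \<noteq> S' \<longrightarrow> adjacent S S'" using Suc.prems(2) by (rule clique_adj)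
    show "1 \<le> (2*m+1)^d" by simp
    show "\<forall>x. \<exists>b. card {S\<in>C. (x,b) \<in> set S} \<le> (2*m+1)^d"
    proof
      fix x
      obtain b where b: "LD (sub H x b) \<le> enat d" using LD_split[OF Suc.prems(1)] by blast
      have "card {S\<in>C. (x,b) \<in> set S} \<le> (2*m+1)^d"
        by (rule Suc.IH[OF b clique_sub[OF Suc.prems(2)]]) (use Suc.prems(3) in auto)
      then show "\<exists>b. card {S\<in>C. (x,b) \<in> set S} \<le> (2*m+1)^d" by blast
    qed
  qed
  then show ?case by simp
qed

lemma adjacent_cons: "adjacent p q \<Longrightarrow> adjacent (a#p) (b#q)"
  unfolding adjacent_def by (metis list.set_intros(2))

lemma adjacent_head: "adjacent ((x,False)#p) ((x,True)#q)" "adjacent ((x,True)#p) ((x,False)#q)"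
  unfolding adjacent_def by (metis list.set_intros(1))+

lemma paths_props:
  "complete_of_depth T d \<Longrightarrow> finite (paths T) \<and> card (paths T) = 2^d \<and>
     (\<forall>p\<in>paths T. length p = d) \<and> (\<forall>p\<in>paths T. \<forall>q\<in>paths T. p \<noteq> q \<longrightarrow> adjacent p q)"
proof (induction T arbitrary: d)
  case Leaf
  then show ?case by simp
next
  case (Node x l r)
  from Node.prems have d: "d > 0" "complete_of_depth l (d-1)" "complete_of_depth r (d-1)" by auto
  note L = Node.IH(1)[OF d(2)] and R = Node.IH(2)[OF d(3)]
  define A where "A = ((#) (x,False)) ` paths l"
  define B where "B = ((#) (x,True)) ` paths r"
  have P: "paths (Node x l r) = A \<union> B" unfolding A_def B_def by simp
  have finA: "finite A" "finite B" using L R unfolding A_def B_def by auto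
  have cA: "card A = 2^(d-1)" unfolding A_def using L by (subst card_image) (auto simp: inj_on_def)
  have cB: "card B = 2^(d-1)" unfolding B_def using R by (subst card_image) (auto simp: inj_on_def)
  have disj: "A \<inter> B = {}" unfolding A_def B_def by blast
  have "card (A \<union> B) = 2^(d-1) + 2^(d-1)" using card_Un_disjoint[OF finA disj] cA cB by simp
  also have "\<dots> = 2^d" using d(1) by (cases d) simp_all
  finally have card: "card (paths (Node x l r)) = 2^d" using P by simp
  have len: "\<forall>p\<in>paths (Node x l r). length p = d"
    using L R d(1) unfolding P A_def B_def by auto
  have adj: "\<forall>p\<in>paths (Node x l r). \<forall>q\<in>paths (Node x l r). p \<noteq> q \<longrightarrow> adjacent p q"
  proof (intro ballI impI)
    fix p q assume p: "p \<in> paths (Node x l r)" and q: "q \<in> paths (Node x l r)" and ne: "p \<noteq> q"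
    from p consider p0 where "p0 \<in> paths l" "p = (x,False)#p0" | p0 where "p0 \<in> paths r" "p = (x,True)#p0"
      unfolding P A_def B_def by blast
    then show "adjacent p q"
    proof cases
      case 1
      from q consider q0 where "q0 \<in> paths l" "q = (x,False)#q0" | q0 where "q0 \<in> paths r" "q = (x,True)#q0"
        unfolding P A_def B_def by blast
      then show ?thesis
      proof cases
        case 1
        then show ?thesis using \<open>p0 \<in> paths l\<close> \<open>p = (x,False)#p0\<close> ne L adjacent_cons by metis
      next
        case 2
        then show ?thesis using \<open>p = (x,False)#p0\<close> adjacent_head by simp
      qed
    next
      case 2
      from q consider q0 where "q0 \<in> paths l" "q = (x,False)#q0" | q0 where "q0 \<in> paths r" "q = (x,True)#q0"
        unfolding P A_def B_def by blast
      then show ?thesis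
      proof cases
        case 1
        then show ?thesis using \<open>p = (x,True)#p0\<close> adjacent_head by simp
      next
        case 2
        then show ?thesis using \<open>p0 \<in> paths r\<close> \<open>p = (x,True)#p0\<close> ne R adjacent_cons by metis
      qed
    qed
  qed
  show ?case using finA P card len adj by simp
qed

lemma kraft:
  fixes C :: "'x dataset set"
  assumes fin: "finite C" and len: "\<forall>S\<in>C. length S = m"
    and cons: "\<forall>S\<in>C. \<forall>x. \<not> ((x,True) \<in> set S \<and> (x,False) \<in> set S)"
    and adj: "\<forall>S\<in>C. \<forall>S'\<in>C. S \<noteq> S' \<longrightarrow> adjacent S S'"
  shows "card C \<le> 2^m"
proof -
  define V where "V = fst ` (\<Union>S\<in>C. set S)"
  have finV: "finite V" unfolding V_def using fin by auto
  define Co where "Co S = {G. G \<subseteq> V \<and> (\<forall>(x,y)\<in>set S. (x\<in>G) = y)}" for S :: "'x dataset"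
  define N where "N = card V"
  have low: "2^(N - m) \<le> card (Co S)" if S: "S \<in> C" for S
  proof -
    define P where "P = fst ` set S"
    define Tr where "Tr = {x. (x,True) \<in> set S}"
    have PV: "P \<subseteq> V" unfolding P_def V_def using S by blast
    have TrP: "Tr \<subseteq> P" unfolding Tr_def P_def by force
    have cP: "card P \<le> m"
    proof -
      have "card P \<le> card (set S)" unfolding P_def by (rule card_image_le) simp
      also have "\<dots> \<le> length S" by (rule card_length)
      finally show ?thesis using len S by simp
    qed
    have "card (V - P) = N - card P" unfolding N_def by (rule card_Diff_subset[OF finite_subset[OF PV finV] PV])
    then have "N - m \<le> card (V - P)" using cP by simp
    then have "(2::nat)^(N - m) \<le> 2^card (V - P)" by (rule power_increasing) simp
    also have "\<dots> = card (Pow (V - P))" using finV by (simp add: card_Pow)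
    also have "\<dots> \<le> card (Co S)"
    proof (rule card_inj_on_le[where f="\<lambda>U. U \<union> Tr"])
      show "inj_on (\<lambda>U. U \<union> Tr) (Pow (V - P))"
      proof (rule inj_onI)
        fix U U' assume "U \<in> Pow (V - P)" "U' \<in> Pow (V - P)" "U \<union> Tr = U' \<union> Tr"
        then show "U = U'" using TrP by blast
      qed
      show "(\<lambda>U. U \<union> Tr) ` Pow (V - P) \<subseteq> Co S"
      proof
        fix G assume "G \<in> (\<lambda>U. U \<union> Tr) ` Pow (V - P)"
        then obtain U where U: "U \<subseteq> V - P" "G = U \<union> Tr" by blast
        have "G \<subseteq> V" using U TrP PV by blast
        moreover have "\<forall>(x,y)\<in>set S. (x\<in>G) = y"
        proof (intro ballI, clarify)
          fix x y assume xy: "(x,y) \<in> set S"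
          then have "x \<in> P" unfolding P_def by force
          then have "x \<notin> U" using U by blast
          then have "(x \<in> G) = (x \<in> Tr)" using U by blast
          also have "\<dots> = y"
          proof (cases y)
            case True then show ?thesis using xy unfolding Tr_def by simp
          next
            case False
            then have "(x,False) \<in> set S" using xy by simp
            then have "(x,True) \<notin> set S" using cons S by blast
            then show ?thesis using False unfolding Tr_def by simp
          qed
          finally show "(x \<in> G) = y" .
        qed
        ultimately show "G \<in> Co S" unfolding Co_def by blast
      qed
      have "Co S \<subseteq> Pow V" unfolding Co_def by blast
      then show "finite (Co S)" using finV by (simp add: finite_subset)
    qed
    finally show ?thesis .
  qed
  have finCo: "\<forall>S\<in>C. finite (Co S)" unfolding Co_def using finV by auto
  have disj: "\<forall>S\<in>C. \<forall>S'\<in>C. S \<noteq> S' \<longrightarrow> Co S \<inter> Co S' = {}"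
  proof (intro ballI impI)
    fix S S' assume "S \<in> C" "S' \<in> C" "S \<noteq> S'"
    then have "adjacent S S'" using adj by blast
    then obtain x where x: "((x,False) \<in> set S \<and> (x,True) \<in> set S') \<or> ((x,True) \<in> set S \<and> (x,False) \<in> set S')"
      unfolding adjacent_def by blast
    show "Co S \<inter> Co S' = {}"
    proof (rule ccontr)
      assume "Co S \<inter> Co S' \<noteq> {}"
      then obtain G where G: "\<forall>(x,y)\<in>set S. (x\<in>G) = y" "\<forall>(x,y)\<in>set S'. (x\<in>G) = y"
        unfolding Co_def by blast
      from x show False
      proof
        assume h: "(x,False) \<in> set S \<and> (x,True) \<in> set S'"
        then have "(x\<in>G) = False" "(x \<in> G) = True" using G by fastforce+
        then show False by simp
      next
        assume h: "(x,True) \<in> set S \<and> (x,False) \<in> set S'"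
        then have "(x\<in>G) = True" "(x \<in> G) = False" using G by fastforce+
        then show False by simp
      qed
    qed
  qed
  have "card C * 2^(N - m) = (\<Sum>S\<in>C. 2^(N-m))" by simp
  also have "\<dots> \<le> (\<Sum>S\<in>C. card (Co S))" by (rule sum_mono) (rule low)
  also have "\<dots> = card (\<Union>S\<in>C. Co S)" by (rule card_UN_disjoint[symmetric]) (use fin finCo disj in auto)
  also have "\<dots> \<le> card (Pow V)" by (rule card_mono) (use finV in \<open>auto simp: Co_def\<close>)
  also have "\<dots> = 2^N" unfolding N_def using finV by (simp add: card_Pow)
  also have "\<dots> \<le> 2^(N - m + m)" by (rule power_increasing) simp_all
  also have "\<dots> = 2^m * 2^(N-m)" by (simp add: power_add)
  finally have "card C * 2^(N - m) \<le> 2^m * 2^(N-m)" .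
  then show ?thesis by simp
qed

lemma clique_number_tree:
  assumes "complete_of_depth T d" "shatters_tree H T"
  shows "clique_number H d = enat (2^d)"
proof (rule antisym)
  show "clique_number H d \<le> enat (2^d)"
    unfolding clique_number_def
  proof (rule Sup_least)
    fix e assume "e \<in> {enat (card C) |C. finite C \<and> is_clique H d C}"
    then obtain C where C: "e = enat (card C)" "finite C" "is_clique H d C" by blast
    have "card C \<le> 2^d"
    proof (rule kraft)
      show "finite C" by fact
      show "\<forall>S\<in>C. length S = d" using C(3) by (rule clique_len)
      show "\<forall>S\<in>C. \<forall>S'\<in>C. S \<noteq> S' \<longrightarrow> adjacent S S'" using C(3) by (rule clique_adj)
      show "\<forall>S\<in>C. \<forall>x. \<not> ((x,True) \<in> set S \<and> (x,False) \<in> set S)"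
      proof (intro ballI allI notI)
        fix S x assume "S \<in> C" and h: "(x,True) \<in> set S \<and> (x,False) \<in> set S"
        then have "realizable H S" using clique_rd[OF C(3)] by simp
        then show False using realizable_cons[of H S x] h by blast
      qed
    qed
    then show "e \<le> enat (2^d)" using C(1) by simp
  qed
  show "enat (2^d) \<le> clique_number H d"
    unfolding clique_number_def
  proof (rule Sup_upper)
    have P: "finite (paths T)" "card (paths T) = 2^d" "\<forall>p\<in>paths T. length p = d"
      "\<forall>p\<in>paths T. \<forall>q\<in>paths T. p \<noteq> q \<longrightarrow> adjacent p q"
      using paths_props[OF assms(1)] by auto
    have "paths T \<subseteq> realizable_datasets H d"
    proof
      fix p assume "p \<in> paths T"
      moreover have "\<forall>p\<in>paths T. realizable H p" using assms(2) unfolding shatters_tree_def .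
      ultimately show "p \<in> realizable_datasets H d" using P(3) unfolding realizable_datasets_def by simp
    qed
    then have "is_clique H d (paths T)" using P(4) unfolding is_clique_def by (rule conjI)
    then show "enat (2^d) \<in> {enat (card C) |C. finite C \<and> is_clique H d C}"
      using P(1,2) by force
  qed
qed

lemma LD_le_CD: "LD H \<le> CD H"
  unfolding LD_def
proof (rule Sup_least)
  fix e assume "e \<in> {enat d |d. \<exists>T. complete_of_depth T d \<and> shatters_tree H T}"
  then obtain d T where e: "e = enat d" "complete_of_depth T d" "shatters_tree H T" by blast
  have "clique_number H d = enat (2^d)" by (rule clique_number_tree[OF e(2,3)])
  then show "e \<le> CD H" unfolding CD_def e(1) by (intro Sup_upper) blast
qed

lemma epow_inf: "2 \<le> b \<Longrightarrow> epow b \<infinity> = \<infinity>"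
  unfolding epow_def by simp

lemma epow_mono:
  assumes b: "2 \<le> b" and le: "e \<le> e'"
  shows "epow b e \<le> epow b e'"
proof (cases e')
  case infinity
  then show ?thesis using epow_inf[OF b] by simp
next
  case (enat n')
  then obtain n where n: "e = enat n" "n \<le> n'" using le by (cases e) auto
  have "b^n \<le> b^n'" by (rule power_increasing) (use n b in auto)
  then show ?thesis using n enat unfolding epow_def by simp
qed

theorem mainTheorem11:
  fixes H :: "('x \<Rightarrow> bool) set" and m :: nat
  assumes "m \<ge> 1"
  shows "clique_number H m \<le> epow (2 * m + 1) (LD H)
       \<and> epow (2 * m + 1) (LD H) \<le> epow (2 * m + 1) (CD H)"
proof
  have b: "2 \<le> 2 * m + 1" using assms by simp
  show "clique_number H m \<le> epow (2 * m + 1) (LD H)"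
  proof (cases "LD H")
    case infinity
    then show ?thesis using epow_inf[OF b] by simp
  next
    case (enat d)
    have "clique_number H m \<le> enat ((2*m+1)^d)"
      unfolding clique_number_def
    proof (rule Sup_least)
      fix e assume "e \<in> {enat (card C) |C. finite C \<and> is_clique H m C}"
      then obtain C where C: "e = enat (card C)" "finite C" "is_clique H m C" by blast
      have "card C \<le> (2*m+1)^d" by (rule clique_bound[OF _ C(3) C(2)]) (simp add: enat)
      then show "e \<le> enat ((2*m+1)^d)" using C(1) by simp
    qed
    then show ?thesis using enat unfolding epow_def by simp
  qed
  show "epow (2 * m + 1) (LD H) \<le> epow (2 * m + 1) (CD H)"
    by (rule epow_mono[OF b LD_le_CD])
qed

end
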